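(* In the Part I procedure, let $xy$ be an edge processed in a bridge step of phase $\Delta$, so $\mathrm{lcp}(x)+\mathrm{lcp}(y)=2\Delta-2$, and let $v$ be a vertex that becomes even in this bridge step. Then $\mathrm{lcp}(v)\ge\Delta$.
   Context: Let $G=(V,E)$ be a finite undirected graph and $M$ a matching in $G$; free vertices and $\mathit{mate}(v)$ are as usual. The Part I procedure maintains a search structure $S$: a forest whose nodes are either single (odd) vertices or blossoms (disjoint vertex sets with a distinguished base vertex), each tree rooted at a blossom containing a free vertex. Vertices in $S$ are labelled even (those in blossoms) or odd; vertices not in $S$ are unlabelled. A vertex is born even/odd according to the label it receives when inserted. The procedure maintains $\mathrm{lcp}(v)$ for even vertices and $\mathrm{lcp}_{\mathrm{odd}}(v)$ for vertices born odd. The blossom nodes currently in $S$ are the maximal blossoms. Phase $0$: every free vertex $v$ becomes the root of its own tree as a trivial blossom $\{v\}$ with base $v$, even, $\mathrm{lcp}(v)=0$. For $\Delta=1,2,\dots$, phase $\Delta$ does: (i) if $\Delta$ is even, growth steps: while some even vertex $v$ with $\mathrm{lcp}(v)=\Delta-2$ has a neighbour $x$ not in $S$, add $x$ as an odd child of the blossom containing $v$ with $\mathrm{lcp}_{\mathrm{odd}}(x)=\Delta-1$, and $\mathit{mate}(x)$ as a child of $x$, as a trivial even blossom with $\mathrm{lcp}(\mathit{mate}(x))=\Delta$; (ii) bridge steps: while there is a non-matching edge $xy$ with $x,y$ even, in different maximal blossoms $B_x,B_y$, and $\mathrm{lcp}(x)+\mathrm{lcp}(y)=2\Delta-2$: if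 $B_x,B_y$ lie in different trees the procedure stops; otherwise let $B$ be the lowest common ancestor of $B_x,B_y$; every odd vertex $z$ on the tree paths from $B_x$ and $B_y$ to $B$ becomes even with $\mathrm{lcp}(z)=\mathrm{lcp}(x)+1+\mathrm{lcp}(y)-\mathrm{lcp}_{\mathrm{odd}}(z)$, and $B$ together with all blossoms and odd vertices on both paths is merged into one new blossom with base equal to the base of $B$, replacing $B$ in the tree. *)

theory Defs
  imports Main
begin

definition graph_matching :: "'v set \<Rightarrow> 'v set set \<Rightarrow> 'v set set \<Rightarrow> bool" where
  "graph_matching V E M \<longleftrightarrow>
     finite V \<and> (\<forall>e\<in>E. \<exists>u w. e = {u, w} \<and> u \<noteq> w \<and> u \<in> V \<and> w \<in> V) \<and>
     M \<subseteq> E \<and> (\<forall>e\<in>M. \<forall>f\<in>M. e \<noteq> f \<longrightarrow> e \<inter> f = {})"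

definition free_vertex :: "'v set \<Rightarrow> 'v set set \<Rightarrow> 'v \<Rightarrow> bool" where
  "free_vertex V M v \<longleftrightarrow> v \<in> V \<and> (\<forall>e\<in>M. v \<notin> e)"

definition mate :: "'v set set \<Rightarrow> 'v \<Rightarrow> 'v" where
  "mate M v = (THE u. {v, u} \<in> M)"

text \<open>Nodes of the search forest: single odd vertices, or blossoms (vertex set, base).\<close>
datatype 'v node = OddN 'v | BlosN "'v set" 'v

fun nverts :: "'v node \<Rightarrow> 'v set" where
  "nverts (OddN z) = {z}"
| "nverts (BlosN S b) = S"

fun is_blossom :: "'v node \<Rightarrow> bool" where
  "is_blossom (OddN z) = False"
| "is_blossom (BlosN S b) = True"

fun nbase :: "'v node \<Rightarrow> 'v" where
  "nbase (OddN z) = z"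
| "nbase (BlosN S b) = b"

record 'v sstate =
  nodes :: "'v node set"            \<comment> \<open>current nodes of S (blossoms are the maximal ones)\<close>
  par   :: "'v node \<Rightarrow> 'v node option"
  lcp   :: "'v \<Rightarrow> int"
  lcpo  :: "'v \<Rightarrow> int"              \<comment> \<open>lcp_odd(v) for vertices born odd\<close>

definition even_verts :: "'v sstate \<Rightarrow> 'v set" where
  "even_verts s = \<Union>{nverts n | n. n \<in> nodes s \<and> is_blossom n}"

definition odd_verts :: "'v sstate \<Rightarrow> 'v set" where
  "odd_verts s = {z. OddN z \<in> nodes s}"

definition in_S :: "'v sstate \<Rightarrow> 'v set" where
  "in_S s = even_verts s \<union> odd_verts s"

definition prel :: "'v sstate \<Rightarrow> ('v node \<times> 'v node) set" where
  "prel s = {(n, p). n \<in> nodes s \<and> par s n = Some p}"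

definition anc :: "'v sstate \<Rightarrow> 'v node \<Rightarrow> 'v node \<Rightarrow> bool" where
  "anc s n m \<longleftrightarrow> (n, m) \<in> (prel s)\<^sup>*"

definition is_lca :: "'v sstate \<Rightarrow> 'v node \<Rightarrow> 'v node \<Rightarrow> 'v node \<Rightarrow> bool" where
  "is_lca s A C B \<longleftrightarrow> anc s A B \<and> anc s C B \<and> (\<forall>D. anc s A D \<and> anc s C D \<longrightarrow> anc s B D)"

definition path_nodes :: "'v sstate \<Rightarrow> 'v node \<Rightarrow> 'v node \<Rightarrow> 'v node set" where
  "path_nodes s A B = {n. anc s A n \<and> anc s n B}"

definition init_state :: "'v set \<Rightarrow> 'v set set \<Rightarrow> 'v sstate" where
  "init_state V M = \<lparr> nodes = {BlosN {v} v | v. free_vertex V M v},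
                      par = (\<lambda>_. None), lcp = (\<lambda>_. 0), lcpo = (\<lambda>_. 0) \<rparr>"

definition growth_step :: "'v set set \<Rightarrow> 'v set set \<Rightarrow> nat \<Rightarrow> 'v sstate \<Rightarrow> 'v \<Rightarrow> 'v \<Rightarrow> 'v sstate \<Rightarrow> bool" where
  "growth_step E M \<Delta> s v x s' \<longleftrightarrow>
     v \<in> even_verts s \<and> lcp s v = int \<Delta> - 2 \<and> {v, x} \<in> E \<and> x \<notin> in_S s \<and>
     (\<exists>Bv. Bv \<in> nodes s \<and> is_blossom Bv \<and> v \<in> nverts Bv \<and>
       (let m = mate M x in
        s' = \<lparr> nodes = nodes s \<union> {OddN x, BlosN {m} m},
               par = (par s)(OddN x := Some Bv, BlosN {m} m := Some (OddN x)),
               lcp = (lcp s)(m := int \<Delta>),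
               lcpo = (lcpo s)(x := int \<Delta> - 1) \<rparr>))"

definition bridge_edge :: "'v set set \<Rightarrow> 'v set set \<Rightarrow> nat \<Rightarrow> 'v sstate \<Rightarrow> 'v \<Rightarrow> 'v \<Rightarrow> 'v node \<Rightarrow> 'v node \<Rightarrow> bool" where
  "bridge_edge E M \<Delta> s x y Bx By \<longleftrightarrow>
     {x, y} \<in> E \<and> {x, y} \<notin> M \<and>
     Bx \<in> nodes s \<and> By \<in> nodes s \<and> is_blossom Bx \<and> is_blossom By \<and> Bx \<noteq> By \<and>
     x \<in> nverts Bx \<and> y \<in> nverts By \<and>
     lcp s x + lcp s y = 2 * int \<Delta> - 2"

text \<open>Bridge step inside one tree: blossom formation (the different-tree case stops the procedure).\<close>
definition bridge_step :: "'v set set \<Rightarrow> 'v set set \<Rightarrow> nat \<Rightarrow> 'v sstate \<Rightarrow> 'v \<Rightarrow> 'v \<Rightarrow> 'v sstate \<Rightarrow> bool" where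
  "bridge_step E M \<Delta> s x y s' \<longleftrightarrow>
     (\<exists>Bx By B. bridge_edge E M \<Delta> s x y Bx By \<and> is_lca s Bx By B \<and>
       (let P = path_nodes s Bx B \<union> path_nodes s By B;
            Z = {z. OddN z \<in> P};
            NB = BlosN (\<Union>(nverts ` P)) (nbase B) in
        s' = \<lparr> nodes = (nodes s - P) \<union> {NB},
               par = (\<lambda>n. if n = NB then par s B
                          else (case par s n of None \<Rightarrow> None
                                | Some p \<Rightarrow> if p \<in> P then Some NB else Some p)),
               lcp = (\<lambda>z. if z \<in> Z then lcp s x + 1 + lcp s y - lcpo s z else lcp s z),
               lcpo = lcpo s \<rparr>))"

datatype stage = Grow | Brid

inductive reach :: "'v set \<Rightarrow> 'v set set \<Rightarrow> 'v set set \<Rightarrow> nat \<Rightarrow> stage \<Rightarrow> 'v sstate \<Rightarrow> bool"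
  for V E M where
  init: "reach V E M 1 Grow (init_state V M)"
| grow: "reach V E M \<Delta> Grow s \<Longrightarrow> even \<Delta> \<Longrightarrow> growth_step E M \<Delta> s v x s' \<Longrightarrow> reach V E M \<Delta> Grow s'"
| to_bridge: "reach V E M \<Delta> Grow s \<Longrightarrow> (odd \<Delta> \<or> \<not> (\<exists>v x s'. growth_step E M \<Delta> s v x s'))
              \<Longrightarrow> reach V E M \<Delta> Brid s"
| bridge: "reach V E M \<Delta> Brid s \<Longrightarrow> bridge_step E M \<Delta> s x y s' \<Longrightarrow> reach V E M \<Delta> Brid s'"
| next_phase: "reach V E M \<Delta> Brid s \<Longrightarrow> \<not> (\<exists>x y Bx By. bridge_edge E M \<Delta> s x y Bx By)
              \<Longrightarrow> reach V E M (Suc \<Delta>) Grow s"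

end

theory Submission
  imports Defs
begin

lemma even_mono_grow:
  assumes "nodes s \<subseteq> nodes s'" shows "even_verts s \<subseteq> even_verts s'"
  using assms unfolding even_verts_def by blast

lemma inv:
  assumes "reach V E M \<Delta> st s"
  shows "(\<forall>z. lcpo s z \<le> int \<Delta> - 1) \<and>
         (\<forall>n p. par s n = Some p \<longrightarrow> p \<in> nodes s \<or> nverts p \<subseteq> even_verts s)"
  using assms
proof (induction rule: reach.induct)
  case init
  then show ?case by (simp add: init_state_def)
next
  case (grow \<Delta> s v x s')
  from grow.hyps(3) obtain Bv where Bv: "Bv \<in> nodes s"
    and s': "s' = \<lparr> nodes = nodes s \<union> {OddN x, BlosN {mate M x} (mate M x)},
               par = (par s)(OddN x := Some Bv, BlosN {mate M x} (mate M x) := Some (OddN x)),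
               lcp = (lcp s)(mate M x := int \<Delta>),
               lcpo = (lcpo s)(x := int \<Delta> - 1) \<rparr>"
    unfolding growth_step_def Let_def by blast
  have ev: "even_verts s \<subseteq> even_verts s'" by (rule even_mono_grow) (auto simp: s')
  show ?case
  proof
    show "\<forall>z. lcpo s' z \<le> int \<Delta> - 1" using grow.IH by (simp add: s')
    show "\<forall>n p. par s' n = Some p \<longrightarrow> p \<in> nodes s' \<or> nverts p \<subseteq> even_verts s'"
    proof (intro allI impI)
      fix n p assume h: "par s' n = Some p"
      have ns: "nodes s \<subseteq> nodes s'" "OddN x \<in> nodes s'" by (auto simp: s')
      have "par s n = Some p \<or> p = Bv \<or> p = OddN x" using h by (auto simp: s' split: if_splits)
      then show "p \<in> nodes s' \<or> nverts p \<subseteq> even_verts s'" using grow.IH ev Bv ns by blast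
    qed
  qed
next
  case (to_bridge \<Delta> s)
  then show ?case by simp
next
  case (bridge \<Delta> s x y s')
  from bridge.hyps(2) obtain Bx By B where
    s': "let P = path_nodes s Bx B \<union> path_nodes s By B;
            Z = {z. OddN z \<in> P};
            NB = BlosN (\<Union>(nverts ` P)) (nbase B) in
        s' = \<lparr> nodes = (nodes s - P) \<union> {NB},
               par = (\<lambda>n. if n = NB then par s B
                          else (case par s n of None \<Rightarrow> None
                                | Some p \<Rightarrow> if p \<in> P then Some NB else Some p)),
               lcp = (\<lambda>z. if z \<in> Z then lcp s x + 1 + lcp s y - lcpo s z else lcp s z),
               lcpo = lcpo s \<rparr>"
    unfolding bridge_step_def by blast
  define P where "P = path_nodes s Bx B \<union> path_nodes s By B"
  define NB where "NB = BlosN (\<Union>(nverts ` P)) (nbase B)"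
  have s'': "s' = \<lparr> nodes = (nodes s - P) \<union> {NB},
               par = (\<lambda>n. if n = NB then par s B
                          else (case par s n of None \<Rightarrow> None
                                | Some p \<Rightarrow> if p \<in> P then Some NB else Some p)),
               lcp = (\<lambda>z. if z \<in> {z. OddN z \<in> P} then lcp s x + 1 + lcp s y - lcpo s z else lcp s z),
               lcpo = lcpo s \<rparr>"
    using s' unfolding Let_def P_def NB_def .
  have nodes': "nodes s' = (nodes s - P) \<union> {NB}" by (subst s'') simp
  have par': "par s' = (\<lambda>n. if n = NB then par s B
                          else (case par s n of None \<Rightarrow> None
                                | Some p \<Rightarrow> if p \<in> P then Some NB else Some p))"
    by (subst s'') simp
  have NBev: "nverts NB \<subseteq> even_verts s'"
  proof -
    have "NB \<in> nodes s'" "is_blossom NB" by (auto simp: nodes' NB_def)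
    then show ?thesis unfolding even_verts_def by blast
  qed
  have lcpo': "lcpo s' = lcpo s" using s' by (simp add: Let_def)
  have ev: "even_verts s \<subseteq> even_verts s'"
  proof
    fix u assume "u \<in> even_verts s"
    then obtain n where n: "n \<in> nodes s" "is_blossom n" "u \<in> nverts n"
      unfolding even_verts_def by blast
    show "u \<in> even_verts s'"
    proof (cases "n \<in> P")
      case True
      then have "u \<in> nverts NB" using n by (auto simp: NB_def)
      then show ?thesis using NBev by blast
    next
      case False
      then show ?thesis using n unfolding even_verts_def nodes' by auto
    qed
  qed
  have sub: "p \<in> P \<Longrightarrow> nverts p \<subseteq> even_verts s'" for p
    using NBev by (auto simp: NB_def)
  have good: "p \<in> nodes s \<or> nverts p \<subseteq> even_verts s \<Longrightarrow> p \<in> nodes s' \<or> nverts p \<subseteq> even_verts s'" for p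
    using ev sub nodes' by blast
  show ?case
  proof
    show "\<forall>z. lcpo s' z \<le> int \<Delta> - 1" using bridge.IH lcpo' by simp
    show "\<forall>n p. par s' n = Some p \<longrightarrow> p \<in> nodes s' \<or> nverts p \<subseteq> even_verts s'"
    proof (intro allI impI)
      fix n p assume h: "par s' n = Some p"
      show "p \<in> nodes s' \<or> nverts p \<subseteq> even_verts s'"
      proof (cases "n = NB")
        case True
        then have "par s B = Some p" using h par' by simp
        then show ?thesis using bridge.IH good by blast
      next
        case False
        then obtain q where q: "par s n = Some q" using h par' by (cases "par s n") auto
        show ?thesis
        proof (cases "q \<in> P")
          case True
          then show ?thesis using h q False par' nodes' by auto
        next
          case False
          then have "p = q" using h q \<open>n \<noteq> NB\<close> par' by auto
          then show ?thesis using q bridge.IH good by blast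
        qed
      qed
    qed
  qed
next
  case (next_phase \<Delta> s)
  have "\<forall>z. lcpo s z \<le> int (Suc \<Delta>) - 1"
  proof
    fix z have "lcpo s z \<le> int \<Delta> - 1" using next_phase.IH by blast
    then show "lcpo s z \<le> int (Suc \<Delta>) - 1" by simp
  qed
  then show ?case using next_phase.IH by blast
qed

lemma stale_path:
  assumes inv: "\<forall>n p. par s n = Some p \<longrightarrow> p \<in> nodes s \<or> nverts p \<subseteq> even_verts s"
    and A: "A \<in> nodes s" and m: "m \<in> path_nodes s A B" and mn: "m \<notin> nodes s"
  shows "nverts m \<subseteq> even_verts s"
proof -
  have "(m, B) \<in> (prel s)\<^sup>*" using m unfolding path_nodes_def anc_def by blast
  then have mB: "m = B"
    by (cases rule: converse_rtranclE) (use mn in \<open>auto simp: prel_def\<close>)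
  have "(A, m) \<in> (prel s)\<^sup>*" using m unfolding path_nodes_def anc_def by blast
  then show ?thesis
  proof (cases rule: rtranclE)
    case base then show ?thesis using A mn by simp
  next
    case (step w)
    then have "par s w = Some m" by (auto simp: prel_def)
    then show ?thesis using inv mn by blast
  qed
qed

theorem lemma4:
  assumes "graph_matching V E M"
    and "reach V E M \<Delta> Brid s"
    and "bridge_step E M \<Delta> s x y s'"
    and "v \<notin> even_verts s"
    and "v \<in> even_verts s'"
  shows "lcp s' v \<ge> int \<Delta>"
proof -
  have I: "\<forall>z. lcpo s z \<le> int \<Delta> - 1"
    "\<forall>n p. par s n = Some p \<longrightarrow> p \<in> nodes s \<or> nverts p \<subseteq> even_verts s"
    using inv[OF assms(2)] by blast+
  from assms(3) obtain Bx By B where be: "bridge_edge E M \<Delta> s x y Bx By" and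
    s': "let P = path_nodes s Bx B \<union> path_nodes s By B;
            Z = {z. OddN z \<in> P};
            NB = BlosN (\<Union>(nverts ` P)) (nbase B) in
        s' = \<lparr> nodes = (nodes s - P) \<union> {NB},
               par = (\<lambda>n. if n = NB then par s B
                          else (case par s n of None \<Rightarrow> None
                                | Some p \<Rightarrow> if p \<in> P then Some NB else Some p)),
               lcp = (\<lambda>z. if z \<in> Z then lcp s x + 1 + lcp s y - lcpo s z else lcp s z),
               lcpo = lcpo s \<rparr>"
    unfolding bridge_step_def by blast
  define P where "P = path_nodes s Bx B \<union> path_nodes s By B"
  define NB where "NB = BlosN (\<Union>(nverts ` P)) (nbase B)"
  have s'': "s' = \<lparr> nodes = (nodes s - P) \<union> {NB},
               par = (\<lambda>n. if n = NB then par s B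
                          else (case par s n of None \<Rightarrow> None
                                | Some p \<Rightarrow> if p \<in> P then Some NB else Some p)),
               lcp = (\<lambda>z. if z \<in> {z. OddN z \<in> P} then lcp s x + 1 + lcp s y - lcpo s z else lcp s z),
               lcpo = lcpo s \<rparr>"
    using s' unfolding Let_def P_def NB_def .
  have nodes': "nodes s' = (nodes s - P) \<union> {NB}" by (subst s'') simp
  have lcp': "lcp s' v = (if OddN v \<in> P then lcp s x + 1 + lcp s y - lcpo s v else lcp s v)"
    by (subst s'') simp
  have sum: "lcp s x + lcp s y = 2 * int \<Delta> - 2" and Ain: "Bx \<in> nodes s" "By \<in> nodes s"
    using be unfolding bridge_edge_def by auto
  have "OddN v \<in> P"
  proof -
    obtain n where n: "n \<in> nodes s'" "is_blossom n" "v \<in> nverts n"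
      using assms(5) unfolding even_verts_def by blast
    have "n \<notin> nodes s - P"
    proof
      assume "n \<in> nodes s - P"
      then have "v \<in> even_verts s" using n unfolding even_verts_def by blast
      then show False using assms(4) by blast
    qed
    then have "n = NB" using n nodes' by blast
    then obtain m where m: "m \<in> P" "v \<in> nverts m" using n by (auto simp: NB_def)
    show ?thesis
    proof (cases m)
      case (OddN z) then show ?thesis using m by simp
    next
      case (BlosN S b)
      show ?thesis
      proof (cases "m \<in> nodes s")
        case True
        then have "v \<in> even_verts s" using m BlosN unfolding even_verts_def by force
        then show ?thesis using assms(4) by blast
      next
        case False
        have "nverts m \<subseteq> even_verts s"
          using m(1) Ain stale_path[OF I(2) _ _ False] unfolding P_def by blast
        then show ?thesis using m assms(4) by blast
      qed
    qed
  qed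
  then have "lcp s' v = lcp s x + 1 + lcp s y - lcpo s v" using lcp' by simp
  moreover have "lcpo s v \<le> int \<Delta> - 1" using I(1) by blast
  ultimately show ?thesis using sum by linarith
qed

end
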